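(* Under the model in the context, for every $q>1$ and every $\varepsilon>0$, $$\lim_{N\to\infty}\Pr\Big(\text{for all profiles }\mathbf a\text{ and all }n\in\mathcal N:\ |B_\varepsilon(\mathbf a_{-n})|\ge\tfrac{1}{2l_N}\big(1-\tfrac1q\big)N\Big)=1.$$ Furthermore, $$\max_{n\in\mathcal N,\ \mathbf a}\Big|\max_{k\in\{1,\dots,K\}}u_n(k,\mathbf a_{-n})-\log_2\Big(1+\frac{g_{n,d(n)}P_n}{N_0}\Big)\Big|\to0$$ in probability as $N\to\infty$ (the maximum being over all players and all channel profiles).
   Context: Model. Fix constants $\lambda>0$, $\alpha>0$, $G>0$, $\theta_T,\theta_R\in(0,2\pi]$, $P_0>0$, $N_0>0$ and a positive integer $S$. For each $N\ge2$ there are $N$ players $\mathcal N=\{1,\dots,N\}$ and a destination map $d:\mathcal N\to\mathcal N$, fixed independently of the player locations, with $d(n)\ne n$ for all $n$ and with every player being the destination of at most $S$ players. The number of channels is $K=N/l_N$ (an integer), where $l_N\ge1$ and $l_N\left(\frac{\log N}{N}\right)^{\frac{\alpha}{\alpha+2}}\to0$ as $N\to\infty$. The locations $x_1,\dots,x_N$ of the players are i.i.d. uniform on a fixed closed set $\mathcal D\subseteq\mathbb R^2$ of area $1/\lambda$. Each player has a transmit beam of angular width $\theta_T$ and a receive beam of angular width $\theta_R$, with fixed arbitrary orientations. For $i\ne j$, $r_{i,j}=\|x_i-x_j\|$; $\theta_{i,j}$ denotes the angle between the direction from $x_i$ to $x_j$ and the bisector of player $i$'s transmit beam when $i$ acts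 as transmitter, resp. of player $i$'s receive beam when $i$ acts as receiver. The channel gain from transmitter $m$ to receiver $d(n)$ is $g_{m,d(n)}=G\,r_{m,d(n)}^{-\alpha}\,\mathbf 1\{|\theta_{m,d(n)}|\le\theta_T/2\}\,\mathbf 1\{|\theta_{d(n),m}|\le\theta_R/2\}$ for $m\ne d(n)$ (angle of $m$ w.r.t. its transmit beam, angle of $d(n)$ w.r.t. its receive beam), and $g_{d(n),d(n)}=+\infty$. Player $n$ transmits with power $P_n\in(0,P_{\max}]$, $P_{\max}=P_0\left(\frac{\log N}{N}\right)^{\alpha/2}$ (the $P_n$ may depend on the locations). Game: each player chooses one channel $a_n\in\{1,\dots,K\}$; $\mathbf a=(a_1,\dots,a_N)$, $\mathbf a_{-n}$ is the profile of the others and $(k,\mathbf a_{-n})$ the profile where $n$ plays $k$. Interference: $I_n(\mathbf a)=\sum_{m\ne n:\,a_m=a_n}g_{m,d(n)}P_m$. Utility: $u_n(\mathbf a)=R_n(\mathbf a)=\log_2\!\big(1+\frac{g_{n,d(n)}P_n}{N_0+I_n(\mathbf a)}\big)$ (equal to $0$ if $I_n(\mathbf a)=\infty$). For $\varepsilon>0$, $B_\varepsilon(\mathbf a_{-n})=\{k:\ u_n(k,\mathbf a_{-n})+\varepsilon\ge\max_{k'}u_n(k',\mathbf a_{-n})\}$. A profile $\mathbf a$ is an $\varepsilon$-PNE if $a_n\in B_\varepsilon(\mathbf a_{-n})$ for all $n$. All probabilities "over the random game" are with respect to the random locations, and limits are as $N\to\infty$ with all constants fixed. *)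

theory Defs
  imports "HOL-Analysis.Analysis"
begin

text \<open>Players are 1..N, channels 1..K.
  The angle between the direction from p to q and a beam bisector of orientation phi is
  Arg ((q - p) / cis phi), a value in (-pi, pi].\<close>

definition gain :: "real \<Rightarrow> real \<Rightarrow> real \<Rightarrow> real \<Rightarrow> (nat \<Rightarrow> complex)
    \<Rightarrow> (nat \<Rightarrow> real) \<Rightarrow> (nat \<Rightarrow> real) \<Rightarrow> nat \<Rightarrow> nat \<Rightarrow> real" where
  "gain G alpha thT thR x oT oR m j =
     G * (cmod (x m - x j)) powr (- alpha)
       * (if \<bar>Arg ((x j - x m) / cis (oT m))\<bar> \<le> thT / 2 then 1 else 0)
       * (if \<bar>Arg ((x m - x j) / cis (oR j))\<bar> \<le> thR / 2 then 1 else 0)"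

text \<open>Rate of player n under profile a; g m j is the gain from transmitter m to receiver j
  (for m \<noteq> j), and g_{d(n),d(n)} = infinity is encoded by the explicit first case.\<close>

definition rate :: "(nat \<Rightarrow> nat \<Rightarrow> real) \<Rightarrow> (nat \<Rightarrow> real) \<Rightarrow> real \<Rightarrow> (nat \<Rightarrow> nat)
    \<Rightarrow> nat \<Rightarrow> nat \<Rightarrow> (nat \<Rightarrow> nat) \<Rightarrow> real" where
  "rate g P N0 d N n a =
     (if (\<exists>m\<in>{1..N}. m \<noteq> n \<and> a m = a n \<and> m = d n) then 0
      else log 2 (1 + g n (d n) * P n /
              (N0 + (\<Sum>m\<in>{m\<in>{1..N}. m \<noteq> n \<and> a m = a n}. g m (d n) * P m))))"

definition best_resp :: "((nat \<Rightarrow> nat) \<Rightarrow> real) \<Rightarrow> nat \<Rightarrow> real \<Rightarrow> nat \<Rightarrow> (nat \<Rightarrow> nat) \<Rightarrow> nat set" where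
  "best_resp u K eps n a =
     {k\<in>{1..K}. (MAX k'\<in>{1..K}. u (a(n := k'))) \<le> u (a(n := k)) + eps}"

definition profiles :: "nat \<Rightarrow> nat \<Rightarrow> (nat \<Rightarrow> nat) set" where
  "profiles N K = {1..N} \<rightarrow>\<^sub>E {1..K}"

definition loc_space :: "complex set \<Rightarrow> nat \<Rightarrow> (nat \<Rightarrow> complex) measure" where
  "loc_space D N = PiM {1..N} (\<lambda>_. uniform_measure lborel D)"

end

theory Submission
  imports Defs "HOL-Probability.Probability" "HOL-Real_Asymp.Real_Asymp"
begin


lemma borel_measurable_Arg[measurable]: "Arg \<in> borel_measurable borel"
proof -
  define A where "A = - (\<real>\<^sub>\<le>\<^sub>0 :: complex set)"
  have A: "A \<in> sets borel" unfolding A_def by (intro borel_open) (simp add: open_Compl)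
  have f1: "(\<lambda>z. indicator A z *\<^sub>R Arg z) \<in> borel_measurable borel"
    by (rule borel_measurable_continuous_on_indicator[OF A]) (simp add: A_def continuous_on_Arg)
  have B: "(\<real>\<^sub>\<le>\<^sub>0 - {0} :: complex set) \<in> sets borel" by auto
  have f2: "(\<lambda>z. indicator (\<real>\<^sub>\<le>\<^sub>0 - {0} :: complex set) z * pi :: real) \<in> borel_measurable borel"
    by (intro borel_measurable_times borel_measurable_indicator B borel_measurable_const)
  have eq: "Arg z = indicator A z *\<^sub>R Arg z + indicator (\<real>\<^sub>\<le>\<^sub>0 - {0}) z * pi" for z
  proof (cases "z \<in> A")
    case True then show ?thesis by (auto simp: A_def indicator_def)
  next
    case False
    then have z: "z \<in> \<real>\<^sub>\<le>\<^sub>0" by (simp add: A_def)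
    show ?thesis
    proof (cases "z = 0")
      case True then show ?thesis using False by (simp add: indicator_def Arg_eq_0_iff)
    next
      case nz: False
      have "Arg z = pi" using z nz
        by (auto simp: Arg_eq_pi_iff nonpos_Reals_def complex_is_Real_iff)
      then show ?thesis using False z nz by (simp add: indicator_def)
    qed
  qed
  have "Arg = (\<lambda>z. indicator A z *\<^sub>R Arg z + indicator (\<real>\<^sub>\<le>\<^sub>0 - {0} :: complex set) z * pi)"
    using eq by (intro ext) simp
  then show ?thesis
    using borel_measurable_add[OF f1 f2] by simp
qed



lemma sets_loc_space:
  assumes "D \<in> sets lborel"
  shows "sets (loc_space D N) = sets (PiM {1..N} (\<lambda>_. borel :: complex measure))"
  unfolding loc_space_def by (intro sets_PiM_cong) auto

lemma gain_meas:
  assumes "m \<in> {1..N}" "j \<in> {1..N}"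
  shows "(\<lambda>x. gain G alpha thT thR x oT oR m j) \<in> borel_measurable (PiM {1..N} (\<lambda>_. borel :: complex measure))"
  unfolding gain_def using assms by measurable

lemma rate_meas:
  assumes g: "\<And>m. m\<in>{1..N} \<Longrightarrow> (\<lambda>x. g x m (d n)) \<in> borel_measurable M"
    and P: "\<And>m. m\<in>{1..N} \<Longrightarrow> (\<lambda>x. Pw x m) \<in> borel_measurable M"
    and n: "n \<in> {1..N}"
  shows "(\<lambda>x. rate (g x) (Pw x) N0 d N n a) \<in> borel_measurable M"
proof -
  have s: "(\<lambda>x. \<Sum>m\<in>{m\<in>{1..N}. m \<noteq> n \<and> a m = a n}. g x m (d n) * Pw x m) \<in> borel_measurable M"
    by (intro borel_measurable_sum borel_measurable_times g P) auto
  show ?thesis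
  proof (cases "\<exists>m\<in>{1..N}. m \<noteq> n \<and> a m = a n \<and> m = d n")
    case True then show ?thesis unfolding rate_def by simp
  next
    case False
    have "(\<lambda>x. log 2 (1 + g x n (d n) * Pw x n / (N0 + (\<Sum>m\<in>{m\<in>{1..N}. m \<noteq> n \<and> a m = a n}. g x m (d n) * Pw x m)))) \<in> borel_measurable M"
      by (intro borel_measurable_log borel_measurable_add borel_measurable_divide
        borel_measurable_times g P n s borel_measurable_const)
    moreover have "(\<lambda>x. rate (g x) (Pw x) N0 d N n a) = (\<lambda>x. log 2 (1 + g x n (d n) * Pw x n / (N0 + (\<Sum>m\<in>{m\<in>{1..N}. m \<noteq> n \<and> a m = a n}. g x m (d n) * Pw x m))))"
      unfolding rate_def using False by (intro ext) (simp only: if_False)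
    ultimately show ?thesis by simp
  qed
qed

lemma card_filter_sum: "finite A \<Longrightarrow> real (card {k\<in>A. Q k}) = (\<Sum>k\<in>A. if Q k then 1 else 0)"
  by (simp add: sum.inter_filter[symmetric])



lemma good_set_meas:
  fixes U :: "'x \<Rightarrow> nat \<Rightarrow> (nat \<Rightarrow> nat) \<Rightarrow> real"
  assumes Prof: "finite Prof"
    and Um: "\<And>a n k. a \<in> Prof \<Longrightarrow> n \<in> {1..N} \<Longrightarrow> (\<lambda>x. U x n (a(n := k))) \<in> borel_measurable M"
  shows "{x \<in> space M. \<forall>a\<in>Prof. \<forall>n\<in>{1..N}. real (card (best_resp (U x n) K eps n a)) \<ge> c} \<in> sets M"
proof -
  have eq: "real (card (best_resp (U x n) K eps n a)) =
     (\<Sum>k\<in>{1..K}. if (MAX k'\<in>{1..K}. U x n (a(n := k'))) \<le> U x n (a(n := k)) + eps then 1 else 0)"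
    for x n a unfolding best_resp_def by (rule card_filter_sum) simp
  have f: "(\<lambda>x. \<Sum>k\<in>{1..K}. if (MAX k'\<in>{1..K}. U x n (a(n := k'))) \<le> U x n (a(n := k)) + eps then 1 else (0::real))
      \<in> borel_measurable M" if "a \<in> Prof" "n \<in> {1..N}" for a n
  proof (intro borel_measurable_sum measurable_If borel_measurable_const)
    fix k
    have "(\<lambda>x. MAX k'\<in>{1..K}. U x n (a(n := k'))) \<in> borel_measurable M"
      by (intro borel_measurable_Max Um that) auto
    moreover have "(\<lambda>x. U x n (a(n := k)) + eps) \<in> borel_measurable M"
      using Um[OF that] by measurable
    ultimately show "{x \<in> space M. (MAX k'\<in>{1..K}. U x n (a(n := k'))) \<le> U x n (a(n := k)) + eps} \<in> sets M"
      by measurable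
  qed
  have "Measurable.pred M (\<lambda>x. \<forall>a\<in>Prof. \<forall>n\<in>{1..N}. c \<le> real (card (best_resp (U x n) K eps n a)))"
    unfolding eq
    by (intro pred_intros_finite Prof finite_atLeastAtMost pred_const_le[OF f]) auto
  then show ?thesis by (rule predE)
qed



lemma logdiff:
  fixes A I t N0 :: real
  assumes "N0 > 0" "A \<ge> 0" "0 \<le> I" "I \<le> t"
  shows "log 2 (1 + A / N0) \<le> log 2 (1 + A / (N0 + I)) + log 2 (1 + t / N0)"
proof -
  have p1: "1 + A / (N0 + I) > 0" using assms by (simp add: add_pos_nonneg)
  have p2: "1 + t / N0 > 0" using assms by (simp add: add_pos_nonneg)
  have "(1 + A / N0) \<le> (1 + A / (N0 + I)) * (1 + t / N0)"
  proof -
    have "(N0 + A) * (N0 + I) \<le> (N0 + I + A) * (N0 + t)"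
    proof -
      have "A * I \<le> A * t" using assms by (intro mult_left_mono) auto
      moreover have "0 \<le> N0 * t + I * t" using assms by simp
      ultimately show ?thesis by (simp add: algebra_simps)
    qed
    moreover have nI: "N0 + I > 0" using assms by simp
    have nz: "I * N0 + N0 * N0 > 0" using assms by (simp add: add_nonneg_pos)
    moreover have "(1 + A / N0) = (N0 + A) * (N0 + I) / (N0 * (N0 + I))"
      using assms nI nz by (simp add: field_simps)
    moreover have "(1 + A / (N0 + I)) * (1 + t / N0) = (N0 + I + A) * (N0 + t) / (N0 * (N0 + I))"
      using assms nI nz by (simp add: field_simps)
    moreover have "N0 * (N0 + I) \<ge> 0" using assms by simp
    ultimately show ?thesis by (metis divide_right_mono)
  qed
  then have "log 2 (1 + A / N0) \<le> log 2 ((1 + A / (N0 + I)) * (1 + t / N0))"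
    using assms p1 p2 by (subst log_le_cancel_iff) (auto simp: add_pos_nonneg)
  also have "\<dots> = log 2 (1 + A / (N0 + I)) + log 2 (1 + t / N0)"
    using p1 p2 by (simp add: log_mult)
  finally show ?thesis .
qed

lemma sum_group_fun:
  fixes f :: "nat \<Rightarrow> real"
  assumes "finite X" "finite B"
  shows "(\<Sum>k\<in>B. \<Sum>m\<in>{m\<in>X. a m = k}. f m) = (\<Sum>m\<in>{m\<in>X. a m \<in> B}. f m)"
proof -
  have "(\<Sum>m\<in>{m\<in>X. a m \<in> B}. f m) = (\<Sum>k\<in>B. \<Sum>m\<in>{m\<in>{m\<in>X. a m \<in> B}. a m = k}. f m)"
    using assms by (intro sum.group[symmetric]) auto
  also have "\<dots> = (\<Sum>k\<in>B. \<Sum>m\<in>{m\<in>X. a m = k}. f m)"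
    by (intro sum.cong) auto
  finally show ?thesis by simp
qed



lemma rate_le:
  assumes N0: "N0 > 0" and nn: "\<forall>m\<in>{1..N}-{d n}. 0 \<le> g m (d n) * Pw m" and A: "0 \<le> g n (d n) * Pw n"
  shows "rate g Pw N0 d N n b \<le> log 2 (1 + g n (d n) * Pw n / N0)"
proof -
  have "0 \<le> g n (d n) * Pw n / N0" using A N0 by simp
  then have R0: "0 \<le> log 2 (1 + g n (d n) * Pw n / N0)" by simp
  show ?thesis
  proof (cases "\<exists>m\<in>{1..N}. m \<noteq> n \<and> b m = b n \<and> m = d n")
    case True then show ?thesis using R0 unfolding rate_def by simp
  next
    case False
    define I where "I = (\<Sum>m\<in>{m\<in>{1..N}. m \<noteq> n \<and> b m = b n}. g m (d n) * Pw m)"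
    have I0: "0 \<le> I" unfolding I_def using False nn by (intro sum_nonneg) auto
    have "g n (d n) * Pw n / (N0 + I) \<le> g n (d n) * Pw n / N0"
      using I0 N0 A by (intro divide_left_mono) auto
    then have "log 2 (1 + g n (d n) * Pw n / (N0 + I)) \<le> log 2 (1 + g n (d n) * Pw n / N0)"
      using I0 N0 A by (subst log_le_cancel_iff) (auto intro: add_pos_nonneg)
    moreover have "rate g Pw N0 d N n b = log 2 (1 + g n (d n) * Pw n / (N0 + I))"
      unfolding rate_def I_def if_not_P[OF False] by (rule refl)
    ultimately show ?thesis by simp
  qed
qed

lemma det_core:
  fixes g :: "nat \<Rightarrow> nat \<Rightarrow> real" and Pw v :: "nat \<Rightarrow> real"
  assumes N0: "N0 > 0" and t: "t > 0"
    and n: "n \<in> {1..N}" and j: "d n \<in> {1..N}" "d n \<noteq> n"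
    and a: "a \<in> profiles N K"
    and gv: "\<forall>m\<in>{1..N}-{d n}. 0 \<le> g m (d n) * Pw m \<and> g m (d n) * Pw m \<le> v m"
    and sumb: "(\<Sum>m\<in>{1..N}-{d n}. min t (v m)) \<le> t * (real K / 2 - 1)"
  shows "\<exists>Gd \<subseteq> {1..K}. real (card Gd) \<ge> real K / 2 \<and>
     (\<forall>k\<in>Gd. log 2 (1 + g n (d n) * Pw n / N0) \<le> rate g Pw N0 d N n (a(n:=k)) + log 2 (1 + t / N0))"
proof -
  define j where "j = d n"
  have jN: "j \<in> {1..N}" "j \<noteq> n" using j by (auto simp: j_def)
  have aj: "a j \<in> {1..K}" using a jN unfolding profiles_def by auto
  have arange: "\<And>m. m \<in> {1..N} \<Longrightarrow> a m \<in> {1..K}" using a unfolding profiles_def by auto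
  have v0: "\<And>m. m \<in> {1..N}-{j} \<Longrightarrow> 0 \<le> v m" using gv unfolding j_def by (meson order.trans)
  define H where "H k = (\<Sum>m\<in>{m\<in>{1..N}. a m = k}. min t (v m))" for k
  define Gd where "Gd = {k\<in>{1..K}. k \<noteq> a j \<and> H k < t}"
  define Bd where "Bd = {k\<in>{1..K}. k \<noteq> a j \<and> t \<le> H k}"
  have H0: "0 \<le> H k" if "k \<noteq> a j" for k
    unfolding H_def using that t v0 by (intro sum_nonneg) auto
  have "real (card Bd) * t = (\<Sum>k\<in>Bd. t)" by simp
  also have "\<dots> \<le> (\<Sum>k\<in>Bd. H k)" by (intro sum_mono) (auto simp: Bd_def)
  also have "\<dots> \<le> (\<Sum>k\<in>{1..K}-{a j}. H k)"
    by (intro sum_mono2) (auto simp: Bd_def intro: H0)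
  also have "\<dots> = (\<Sum>m\<in>{m\<in>{1..N}. a m \<in> {1..K}-{a j}}. min t (v m))"
    unfolding H_def by (rule sum_group_fun) auto
  also have "\<dots> \<le> (\<Sum>m\<in>{1..N}-{j}. min t (v m))"
    using t v0 by (intro sum_mono2) auto
  also have "\<dots> \<le> t * (real K / 2 - 1)" using sumb by (simp add: j_def)
  finally have Bdb: "real (card Bd) \<le> real K / 2 - 1" using t by (simp add: mult.commute)
  have "{1..K} \<subseteq> Gd \<union> Bd \<union> {a j}" unfolding Gd_def Bd_def by auto
  then have "card {1..K} \<le> card (Gd \<union> Bd \<union> {a j})" by (intro card_mono) (auto simp: Gd_def Bd_def)
  also have "\<dots> \<le> card Gd + card Bd + 1"
  proof -
    have "card (Gd \<union> Bd \<union> {a j}) \<le> card (Gd \<union> Bd) + card {a j}" by (rule card_Un_le)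
    moreover have "card (Gd \<union> Bd) \<le> card Gd + card Bd" by (rule card_Un_le)
    ultimately show ?thesis by simp
  qed
  finally have "real K \<le> real (card Gd) + real (card Bd) + 1" by simp
  then have cG: "real (card Gd) \<ge> real K / 2" using Bdb by simp
  have good: "log 2 (1 + g n j * Pw n / N0) \<le> rate g Pw N0 d N n (a(n:=k)) + log 2 (1 + t / N0)"
    if k: "k \<in> Gd" for k
  proof -
    have kj: "k \<noteq> a j" "H k < t" using k by (auto simp: Gd_def)
    have nc: "\<not> (\<exists>m\<in>{1..N}. m \<noteq> n \<and> (a(n:=k)) m = (a(n:=k)) n \<and> m = d n)"
      using kj jN by (auto simp: j_def)
    define I where "I = (\<Sum>m\<in>{m\<in>{1..N}. m \<noteq> n \<and> (a(n:=k)) m = (a(n:=k)) n}. g m (d n) * Pw m)"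
    have rt: "rate g Pw N0 d N n (a(n:=k)) = log 2 (1 + g n (d n) * Pw n / (N0 + I))"
      unfolding rate_def I_def if_not_P[OF nc] by (rule refl)
    have sub: "{m\<in>{1..N}. m \<noteq> n \<and> (a(n:=k)) m = (a(n:=k)) n} = {m\<in>{1..N}. m \<noteq> n \<and> a m = k}"
      by auto
    have Tj: "\<And>m. m \<in> {1..N} \<Longrightarrow> a m = k \<Longrightarrow> m \<in> {1..N} - {j}" using kj by auto
    have I0: "0 \<le> I" unfolding I_def sub using gv Tj unfolding j_def by (intro sum_nonneg) blast
    have "I \<le> (\<Sum>m\<in>{m\<in>{1..N}. a m = k}. g m j * Pw m)"
      unfolding I_def sub j_def using gv Tj unfolding j_def by (intro sum_mono2) auto
    also have "\<dots> \<le> (\<Sum>m\<in>{m\<in>{1..N}. a m = k}. min t (v m))"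
    proof (intro sum_mono)
      fix m assume m: "m \<in> {m\<in>{1..N}. a m = k}"
      have "min t (v m) \<le> H k"
        unfolding H_def using m Tj t v0 by (intro member_le_sum) auto
      then have "min t (v m) = v m" using kj by (auto simp: min_def)
      then show "g m j * Pw m \<le> min t (v m)" using gv Tj m unfolding j_def by auto
    qed
    also have "\<dots> < t" using kj unfolding H_def by simp
    finally have It: "I \<le> t" by simp
    have A0: "0 \<le> g n j * Pw n" using gv n jN unfolding j_def by auto
    show ?thesis using logdiff[OF N0 A0 I0 It] rt by (simp add: j_def)
  qed
  show ?thesis
    by (intro exI[of _ Gd] conjI cG ballI) (auto simp: Gd_def good[unfolded j_def])
qed



lemma exp_le_lin: fixes s :: real assumes "0 \<le> s" "s \<le> 1" shows "exp s \<le> 1 + exp 1 * s"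
proof -
  have "1 - s \<le> exp (- s)" using exp_ge_add_one_self[of "-s"] by simp
  then have "(1 - s) * exp s \<le> exp (- s) * exp s" by (intro mult_right_mono) auto
  then have "exp s - s * exp s \<le> 1" by (simp add: algebra_simps exp_minus_inverse)
  moreover have "s * exp s \<le> s * exp 1" using assms by (intro mult_left_mono) auto
  ultimately show ?thesis by (simp add: algebra_simps)
qed

lemma tail_bound:
  fixes U :: "'a measure" and h :: "'a \<Rightarrow> 'a \<Rightarrow> real"
  assumes U: "prob_space U" and I: "finite I" "j \<notin> I" and t: "t > 0" and mu0: "0 \<le> \<mu>"
    and hm: "\<And>m. m \<in> I \<Longrightarrow> (\<lambda>x. h (x m) (x j)) \<in> borel_measurable (PiM (insert j I) (\<lambda>_. U))"
    and hy: "\<And>y. (\<lambda>z. h z y) \<in> borel_measurable U"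
    and h01: "\<And>z y. 0 \<le> h z y \<and> h z y \<le> t"
    and mu: "\<And>y. y \<in> space U \<Longrightarrow> (\<integral>\<^sup>+z. ennreal (h z y) \<partial>U) \<le> ennreal \<mu>"
  shows "emeasure (PiM (insert j I) (\<lambda>_. U)) {x \<in> space (PiM (insert j I) (\<lambda>_. U)). (\<Sum>m\<in>I. h (x m) (x j)) > A}
          \<le> ennreal (exp (- A / t) * (1 + exp 1 * \<mu> / t) ^ card I)"
proof -
  interpret PS: product_sigma_finite "\<lambda>_. U"
    unfolding product_sigma_finite_def using prob_space_imp_sigma_finite[OF U] by simp
  interpret U: prob_space U by (rule U)
  define Mx where "Mx = PiM (insert j I) (\<lambda>_. U)"
  define f where "f x = (\<Prod>m\<in>I. ennreal (exp (h (x m) (x j) / t)))" for x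
  have sm: "(\<lambda>x. \<Sum>m\<in>I. h (x m) (x j)) \<in> borel_measurable Mx"
    unfolding Mx_def by (intro borel_measurable_sum hm)
  have Bm: "{x \<in> space Mx. (\<Sum>m\<in>I. h (x m) (x j)) > A} \<in> sets Mx"
    using sm by measurable
  have fm: "f \<in> borel_measurable Mx"
    unfolding f_def Mx_def
  proof (intro borel_measurable_prod_ennreal)
    fix m assume "m \<in> I"
    from hm[OF this] show "(\<lambda>x. ennreal (exp (h (x m) (x j) / t))) \<in> borel_measurable (PiM (insert j I) (\<lambda>_. U))"
      by measurable
  qed
  have "emeasure Mx {x \<in> space Mx. (\<Sum>m\<in>I. h (x m) (x j)) > A}
      = (\<integral>\<^sup>+x. indicator {x \<in> space Mx. (\<Sum>m\<in>I. h (x m) (x j)) > A} x \<partial>Mx)"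
    using Bm by simp
  also have "\<dots> \<le> (\<integral>\<^sup>+x. ennreal (exp (- A / t)) * f x \<partial>Mx)"
  proof (intro nn_integral_mono)
    fix x assume "x \<in> space Mx"
    show "indicator {x \<in> space Mx. (\<Sum>m\<in>I. h (x m) (x j)) > A} x \<le> ennreal (exp (- A / t)) * f x"
    proof (cases "(\<Sum>m\<in>I. h (x m) (x j)) > A")
      case True
      have "f x = ennreal (\<Prod>m\<in>I. exp (h (x m) (x j) / t))"
        unfolding f_def by (rule prod_ennreal) simp
      also have "(\<Prod>m\<in>I. exp (h (x m) (x j) / t)) = exp ((\<Sum>m\<in>I. h (x m) (x j)) / t)"
        using I by (simp add: exp_sum sum_divide_distrib)
      finally have fx: "f x = ennreal (exp ((\<Sum>m\<in>I. h (x m) (x j)) / t))" .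
      have "1 \<le> exp (- A / t) * exp ((\<Sum>m\<in>I. h (x m) (x j)) / t)"
        using True t by (simp add: exp_add[symmetric] diff_divide_distrib[symmetric] divide_minus_left)
      then show ?thesis using fx by (simp add: ennreal_mult[symmetric] indicator_def)
    qed (simp add: indicator_def)
  qed
  also have "\<dots> = ennreal (exp (- A / t)) * (\<integral>\<^sup>+x. f x \<partial>Mx)"
    using fm by (simp add: nn_integral_cmult)
  also have "(\<integral>\<^sup>+x. f x \<partial>Mx) = (\<integral>\<^sup>+ y. (\<integral>\<^sup>+ x. f (x(j := y)) \<partial>(PiM I (\<lambda>_. U))) \<partial>U)"
    unfolding Mx_def using I fm unfolding Mx_def by (intro PS.product_nn_integral_insert_rev) auto
  also have "\<dots> \<le> (\<integral>\<^sup>+ y. ennreal ((1 + exp 1 * \<mu> / t) ^ card I) \<partial>U)"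
  proof (intro nn_integral_mono)
    fix y assume y: "y \<in> space U"
    have "(\<integral>\<^sup>+ x. f (x(j := y)) \<partial>(PiM I (\<lambda>_. U)))
        = (\<integral>\<^sup>+ x. (\<Prod>m\<in>I. ennreal (exp (h (x m) y / t))) \<partial>(PiM I (\<lambda>_. U)))"
      unfolding f_def using I by (intro nn_integral_cong prod.cong) auto
    also have "\<dots> = (\<Prod>m\<in>I. \<integral>\<^sup>+ z. ennreal (exp (h z y / t)) \<partial>U)"
      using I hy by (intro PS.product_nn_integral_prod) auto
    also have "\<dots> \<le> (\<Prod>m\<in>I. ennreal (1 + exp 1 * \<mu> / t))"
    proof (intro prod_mono_ennreal)
      fix m assume "m \<in> I"
      have "(\<integral>\<^sup>+ z. ennreal (exp (h z y / t)) \<partial>U) \<le> (\<integral>\<^sup>+ z. 1 + ennreal (exp 1 / t) * ennreal (h z y) \<partial>U)"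
      proof (intro nn_integral_mono)
        fix z
        have "exp (h z y / t) \<le> 1 + exp 1 * (h z y / t)"
          using h01[of z y] t by (intro exp_le_lin) auto
        also have "\<dots> = 1 + exp 1 / t * h z y" by simp
        finally have le: "ennreal (exp (h z y / t)) \<le> ennreal (1 + exp 1 / t * h z y)"
          by (rule ennreal_leI)
        have nn: "0 \<le> exp 1 / t * h z y" using h01[of z y] t by simp
        have "ennreal (1 + exp 1 / t * h z y) = 1 + ennreal (exp 1 / t * h z y)"
          using nn by (subst ennreal_plus) auto
        also have "ennreal (exp 1 / t * h z y) = ennreal (exp 1 / t) * ennreal (h z y)"
          using h01[of z y] t by (subst ennreal_mult) auto
        finally show "ennreal (exp (h z y / t)) \<le> 1 + ennreal (exp 1 / t) * ennreal (h z y)"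
          using le by simp
      qed
      also have "\<dots> = 1 + ennreal (exp 1 / t) * (\<integral>\<^sup>+ z. ennreal (h z y) \<partial>U)"
        using hy by (simp add: nn_integral_add nn_integral_cmult U.emeasure_space_1)
      also have "\<dots> \<le> 1 + ennreal (exp 1 / t) * ennreal \<mu>"
        using mu[OF y] by (intro add_left_mono mult_left_mono) auto
      also have "\<dots> = 1 + ennreal (exp 1 * \<mu> / t)"
        using t mu0 by (simp add: ennreal_mult[symmetric])
      also have "\<dots> = ennreal (1 + exp 1 * \<mu> / t)"
        using t mu0 by (subst ennreal_plus) auto
      finally show "(\<integral>\<^sup>+ z. ennreal (exp (h z y / t)) \<partial>U) \<le> ennreal (1 + exp 1 * \<mu> / t)" .
    qed
    also have "\<dots> = ennreal ((1 + exp 1 * \<mu> / t) ^ card I)"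
      using t mu0 by (simp only: prod_constant, subst ennreal_power) auto
    finally show "(\<integral>\<^sup>+ x. f (x(j := y)) \<partial>(PiM I (\<lambda>_. U))) \<le> ennreal ((1 + exp 1 * \<mu> / t) ^ card I)" .
  qed
  also have "\<dots> = ennreal ((1 + exp 1 * \<mu> / t) ^ card I)"
    by (simp add: U.emeasure_space_1)
  finally show ?thesis
    using t mu0 by (simp add: Mx_def ennreal_mult[symmetric] mult_left_mono)
qed



lemma ball_measure_le:
  fixes y :: complex assumes R: "R > 0"
  shows "emeasure lborel (ball y R) \<le> ennreal (4 * R * R)"
proof -
  define w where "w = Complex R R"
  have sub: "ball y R \<subseteq> cbox (y - w) (y + w)"
  proof
    fix z assume "z \<in> ball y R"
    then have d: "cmod (y - z) < R" by (simp add: dist_norm)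
    have "\<bar>Re (y - z)\<bar> \<le> cmod (y - z)" "\<bar>Im (y - z)\<bar> \<le> cmod (y - z)"
      by (rule abs_Re_le_cmod, rule abs_Im_le_cmod)
    then show "z \<in> cbox (y - w) (y + w)"
      using d by (auto simp: mem_box Basis_complex_def w_def)
  qed
  have "emeasure lborel (ball y R) \<le> emeasure lborel (cbox (y - w) (y + w))"
    using sub by (intro emeasure_mono) auto
  also have "\<dots> = ennreal (4 * R * R)"
    using R by (simp add: emeasure_lborel_cbox_eq Basis_complex_def w_def)
  finally show ?thesis .
qed

lemma mu_bound:
  fixes D :: "complex set"
  assumes lam: "lam > 0" and Dm: "D \<in> sets lborel" and DA: "measure lborel D = 1 / lam"
    and t: "t > 0" and c: "c \<ge> 0" and R: "R > 0" and alpha: "alpha > 0"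
  shows "(\<integral>\<^sup>+z. ennreal (min t (c * cmod (z - y) powr (- alpha))) \<partial>uniform_measure lborel D)
          \<le> ennreal (t * (4 * R * R * lam) + c * R powr (- alpha))"
proof -
  define U where "U = uniform_measure lborel D"
  have ED: "emeasure lborel D = ennreal (1 / lam)"
  proof -
    have "emeasure lborel D \<noteq> \<top>"
    proof
      assume "emeasure lborel D = \<top>"
      then have "measure lborel D = 0" by (simp add: measure_def)
      then show False using DA lam by simp
    qed
    then show ?thesis using DA by (simp add: emeasure_eq_ennreal_measure)
  qed
  have Uball: "emeasure U (ball y R) \<le> ennreal (4 * R * R * lam)"
  proof -
    have "emeasure U (ball y R) = emeasure lborel (D \<inter> ball y R) / emeasure lborel D"
      unfolding U_def using Dm by (intro emeasure_uniform_measure) auto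
    also have "\<dots> \<le> emeasure lborel (ball y R) / emeasure lborel D"
      using Dm by (intro divide_right_mono_ennreal emeasure_mono) auto
    also have "\<dots> \<le> ennreal (4 * R * R) / ennreal (1 / lam)"
      unfolding ED by (intro divide_right_mono_ennreal ball_measure_le R)
    also have "\<dots> = ennreal (4 * R * R * lam)"
      using R lam by (subst divide_ennreal) auto
    finally show ?thesis .
  qed
  have Uprob: "prob_space U"
    unfolding U_def using ED lam by (intro prob_space_uniform_measure) auto
  then interpret U: prob_space U .
  have pw: "ennreal (min t (c * cmod (z - y) powr (- alpha)))
      \<le> ennreal t * indicator (ball y R) z + ennreal (c * R powr (- alpha))" for z
  proof (cases "z \<in> ball y R")
    case True
    have "min t (c * cmod (z - y) powr (- alpha)) \<le> t + c * R powr (- alpha)"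
      using c by (simp add: min_le_iff_disj)
    then show ?thesis using True t c
      by (simp add: ennreal_plus[symmetric] del: ennreal_plus)
  next
    case False
    then have "R \<le> cmod (z - y)" by (simp add: dist_norm norm_minus_commute)
    then have "cmod (z - y) powr (- alpha) \<le> R powr (- alpha)"
      using R alpha by (intro powr_mono2') auto
    then have "min t (c * cmod (z - y) powr (- alpha)) \<le> c * R powr (- alpha)"
      using c by (simp add: min_le_iff_disj mult_left_mono)
    then show ?thesis using False by (simp add: ennreal_leI)
  qed
  have "(\<integral>\<^sup>+z. ennreal (min t (c * cmod (z - y) powr (- alpha))) \<partial>U)
      \<le> (\<integral>\<^sup>+z. ennreal t * indicator (ball y R) z + ennreal (c * R powr (- alpha)) \<partial>U)"
    by (intro nn_integral_mono pw)
  also have "\<dots> = ennreal t * emeasure U (ball y R) + ennreal (c * R powr (- alpha))"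
  proof -
    have bs: "ball y R \<in> sets U" unfolding U_def by simp
    have "(\<integral>\<^sup>+z. ennreal t * indicator (ball y R) z + ennreal (c * R powr (- alpha)) \<partial>U)
       = (\<integral>\<^sup>+z. ennreal t * indicator (ball y R) z \<partial>U) + (\<integral>\<^sup>+z. ennreal (c * R powr (- alpha)) \<partial>U)"
      using bs by (intro nn_integral_add) auto
    also have "(\<integral>\<^sup>+z. ennreal t * indicator (ball y R) z \<partial>U) = ennreal t * emeasure U (ball y R)"
      using bs by (rule nn_integral_cmult_indicator)
    also have "(\<integral>\<^sup>+z. ennreal (c * R powr (- alpha)) \<partial>U) = ennreal (c * R powr (- alpha))"
      by (simp add: U.emeasure_space_1)
    finally show ?thesis .
  qed
  also have "\<dots> \<le> ennreal t * ennreal (4 * R * R * lam) + ennreal (c * R powr (- alpha))"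
    using Uball by (intro add_right_mono mult_left_mono) auto
  also have "\<dots> = ennreal (t * (4 * R * R * lam) + c * R powr (- alpha))"
    using t R lam c by (simp add: ennreal_mult[symmetric] ennreal_plus[symmetric] del: ennreal_plus)
  finally show ?thesis unfolding U_def .
qed



definition Eset :: "complex set \<Rightarrow> real \<Rightarrow> real \<Rightarrow> real \<Rightarrow> nat \<Rightarrow> nat \<Rightarrow> (nat \<Rightarrow> complex) set" where
  "Eset D alpha c t K N = {x\<in>space (loc_space D N). \<forall>j\<in>{1..N}.
      (\<Sum>m\<in>{1..N}-{j}. min t (c * cmod (x m - x j) powr (- alpha))) \<le> t * (real K / 2 - 1)}"

lemma meas_transfer:
  assumes "D \<in> sets lborel"
    and "f \<in> borel_measurable (PiM {1..N} (\<lambda>_. borel :: complex measure))"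
  shows "f \<in> borel_measurable (loc_space D N)"
  by (subst measurable_cong_sets[OF sets_loc_space[OF assms(1)] refl]) (rule assms(2))

lemma Eset_sets:
  assumes "D \<in> sets lborel"
  shows "Eset D alpha c t K N \<in> sets (loc_space D N)"
proof -
  have "(\<lambda>x. \<Sum>m\<in>{1..N}-{j}. min t (c * cmod (x m - x j) powr (- alpha))) \<in> borel_measurable (loc_space D N)"
    if "j \<in> {1..N}" for j
    using that by (intro meas_transfer[OF assms]) measurable
  then show ?thesis unfolding Eset_def
    by (intro predE pred_intros_finite pred_le_const[where N=borel]) auto
qed

lemma bad_bound:
  fixes D :: "complex set"
  assumes lam: "lam > 0" and Dm: "D \<in> sets lborel" and DA: "measure lborel D = 1 / lam"
    and t: "t > 0" and c: "c \<ge> 0" and R: "R > 0" and alpha: "alpha > 0"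
  shows "measure (loc_space D N) (space (loc_space D N) - Eset D alpha c t K N)
     \<le> real N * (exp (- (real K / 2 - 1)) * (1 + exp 1 * (t * (4 * R * R * lam) + c * R powr (- alpha)) / t) ^ (N - 1))"
proof -
  define U where "U = uniform_measure lborel D"
  define M where "M = loc_space D N"
  define \<mu> where "\<mu> = t * (4 * R * R * lam) + c * R powr (- alpha)"
  define h where "h z y = min t (c * cmod (z - y) powr (- alpha))" for z y :: complex
  define Bd where "Bd j = {x \<in> space M. (\<Sum>m\<in>{1..N}-{j}. h (x m) (x j)) > t * (real K / 2 - 1)}" for j
  have mu0: "0 \<le> \<mu>" unfolding \<mu>_def using t R lam c by simp
  have ED: "emeasure lborel D \<noteq> 0" "emeasure lborel D \<noteq> \<top>"
  proof -
    show "emeasure lborel D \<noteq> \<top>"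
    proof
      assume "emeasure lborel D = \<top>"
      then have "measure lborel D = 0" by (simp add: measure_def)
      then show False using DA lam by simp
    qed
    show "emeasure lborel D \<noteq> 0"
    proof
      assume "emeasure lborel D = 0"
      then have "measure lborel D = 0" by (simp add: measure_def)
      then show False using DA lam by simp
    qed
  qed
  have Uprob: "prob_space U" unfolding U_def using ED by (intro prob_space_uniform_measure) auto
  have Mprob: "prob_space M" unfolding M_def loc_space_def
    by (intro prob_space_PiM) (simp add: Uprob[unfolded U_def])
  then interpret M: prob_space M .
  have Bd_sets: "Bd j \<in> sets M" if "j \<in> {1..N}" for j
  proof -
    have "(\<lambda>x. \<Sum>m\<in>{1..N}-{j}. h (x m) (x j)) \<in> borel_measurable M"
      unfolding M_def h_def using that by (intro meas_transfer[OF Dm]) measurable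
    then show ?thesis unfolding Bd_def by measurable
  qed
  have sub: "space M - Eset D alpha c t K N \<subseteq> (\<Union>j\<in>{1..N}. Bd j)"
    unfolding Eset_def Bd_def M_def h_def by (auto simp: not_le)
  have Bd_le: "measure M (Bd j) \<le> exp (- (real K / 2 - 1)) * (1 + exp 1 * \<mu> / t) ^ (N - 1)"
    if j: "j \<in> {1..N}" for j
  proof -
    define I where "I = {1..N} - {j}"
    have iI: "insert j I = {1..N}" using j unfolding I_def by auto
    have cI: "card I = N - 1" using j unfolding I_def by simp
    have MI: "M = PiM (insert j I) (\<lambda>_. U)" unfolding M_def loc_space_def U_def iI ..
    have "emeasure (PiM (insert j I) (\<lambda>_. U)) {x \<in> space (PiM (insert j I) (\<lambda>_. U)). (\<Sum>m\<in>I. h (x m) (x j)) > t * (real K / 2 - 1)}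
          \<le> ennreal (exp (- (t * (real K / 2 - 1)) / t) * (1 + exp 1 * \<mu> / t) ^ card I)"
    proof (rule tail_bound[OF Uprob _ _ t mu0])
      show "finite I" "j \<notin> I" unfolding I_def by auto
      fix m assume "m \<in> I"
      then have m: "m \<in> {1..N}" unfolding I_def by auto
      show "(\<lambda>x. h (x m) (x j)) \<in> borel_measurable (PiM (insert j I) (\<lambda>_. U))"
        unfolding MI[symmetric] M_def h_def using m j by (intro meas_transfer[OF Dm]) measurable
    next
      fix y :: complex
      have "(\<lambda>z. h z y) \<in> borel_measurable borel" unfolding h_def by measurable
      then show "(\<lambda>z. h z y) \<in> borel_measurable U"
        unfolding U_def using measurable_cong_sets[of "uniform_measure lborel D" borel] by simp
    next
      fix z y show "0 \<le> h z y \<and> h z y \<le> t" unfolding h_def using t c by simp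
    next
      fix y :: complex
      show "(\<integral>\<^sup>+z. ennreal (h z y) \<partial>U) \<le> ennreal \<mu>"
        unfolding U_def h_def \<mu>_def by (rule mu_bound[OF lam Dm DA t c R alpha])
    qed
    then have A: "emeasure M {x \<in> space M. (\<Sum>m\<in>I. h (x m) (x j)) > t * (real K / 2 - 1)}
          \<le> ennreal (exp (- (t * (real K / 2 - 1)) / t) * (1 + exp 1 * \<mu> / t) ^ card I)"
      unfolding MI .
    have "exp (- (t * (real K / 2 - 1)) / t) = exp (- (real K / 2 - 1))" using t by simp
    then have "emeasure M (Bd j) \<le> ennreal (exp (- (real K / 2 - 1)) * (1 + exp 1 * \<mu> / t) ^ (N - 1))"
      using A unfolding Bd_def cI by (simp add: I_def)
    moreover have "0 \<le> exp (- (real K / 2 - 1)) * (1 + exp 1 * \<mu> / t) ^ (N - 1)"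
      using mu0 t by simp
    ultimately show ?thesis
      using M.emeasure_eq_measure[of "Bd j"] by simp
  qed
  have "measure M (space M - Eset D alpha c t K N) \<le> measure M (\<Union>j\<in>{1..N}. Bd j)"
    using sub Bd_sets by (intro M.finite_measure_mono) auto
  also have "\<dots> \<le> (\<Sum>j\<in>{1..N}. measure M (Bd j))"
    using Bd_sets by (intro M.finite_measure_subadditive_finite) auto
  also have "\<dots> \<le> (\<Sum>j\<in>{1..N}. exp (- (real K / 2 - 1)) * (1 + exp 1 * \<mu> / t) ^ (N - 1))"
    by (intro sum_mono Bd_le)
  also have "\<dots> = real N * (exp (- (real K / 2 - 1)) * (1 + exp 1 * \<mu> / t) ^ (N - 1))" by simp
  finally show ?thesis unfolding M_def \<mu>_def .
qed



lemma pow_le_exp: fixes x :: real assumes "0 \<le> x" shows "(1 + x) ^ n \<le> exp (real n * x)"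
proof -
  have "(1 + x) ^ n \<le> exp x ^ n" using assms by (intro power_mono) (auto simp: exp_ge_add_one_self)
  also have "\<dots> = exp (real n * x)" by (simp add: exp_of_nat_mult)
  finally show ?thesis .
qed

lemma asymp1: assumes "0 < a" "a < 1" "C > 0"
  shows "(\<lambda>N::nat. real N * exp (- (C * (real N * (ln (real N) / real N) powr a)))) \<longlonglongrightarrow> 0"
  using assms by real_asymp

lemma bad_tendsto:
  fixes D :: "complex set" and l :: "nat \<Rightarrow> real" and K :: "nat \<Rightarrow> nat"
  assumes lam: "lam > 0" and Dm: "D \<in> sets lborel" and DA: "measure lborel D = 1 / lam"
    and alpha: "alpha > 0" and G: "G > 0" and P0: "P0 > 0" and t: "t > 0"
    and K_def: "\<And>N. N \<ge> 2 \<Longrightarrow> real (K N) * l N = real N"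
    and l_ge: "\<And>N. N \<ge> 2 \<Longrightarrow> l N \<ge> 1"
    and l_lim: "(\<lambda>N. l N * (ln (real N) / real N) powr (alpha / (alpha + 2))) \<longlonglongrightarrow> 0"
  shows "(\<lambda>N. measure (loc_space D N) (space (loc_space D N) -
            Eset D alpha (G * (P0 * (ln (real N) / real N) powr (alpha / 2))) t (K N) N)) \<longlonglongrightarrow> 0"
proof -
  define w where "w N = (ln (real N) / real N) powr (alpha / (alpha + 2))" for N :: nat
  define C0 where "C0 = (G * P0) powr (2 / (alpha + 2))"
  define C where "C = exp 1 * (4 * t * lam + 1) * C0 / t"
  have C0p: "C0 > 0" unfolding C0_def using G P0 by simp
  have tl: "0 < 4 * t * lam + 1" using t lam by (simp add: add_pos_pos)
  have Cp: "C > 0" unfolding C_def using tl using C0p t lam by (intro divide_pos_pos mult_pos_pos) auto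
  have ev1: "eventually (\<lambda>N. l N * w N < 1 / (4 * C)) sequentially"
    using order_tendstoD(2)[OF l_lim, of "1 / (4 * C)"] Cp unfolding w_def by simp
  have ev2: "eventually (\<lambda>N. N \<ge> 2) sequentially" by (rule eventually_ge_at_top)
  define B where "B N = exp 1 * (real N * exp (- (C * (real N * (ln (real N) / real N) powr (alpha / (alpha + 2))))))" for N :: nat
  have Blim: "B \<longlonglongrightarrow> 0"
  proof -
    have "(\<lambda>N::nat. real N * exp (- (C * (real N * (ln (real N) / real N) powr (alpha / (alpha + 2)))))) \<longlonglongrightarrow> 0"
      using alpha Cp by (intro asymp1) auto
    from tendsto_mult[OF tendsto_const[of "exp 1"] this] show ?thesis unfolding B_def by simp
  qed
  have le: "eventually (\<lambda>N. measure (loc_space D N) (space (loc_space D N) -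
            Eset D alpha (G * (P0 * (ln (real N) / real N) powr (alpha / 2))) t (K N) N) \<le> B N) sequentially"
    using ev1 ev2
  proof eventually_elim
    case (elim N)
    define cN where "cN = G * (P0 * (ln (real N) / real N) powr (alpha / 2))"
    have lnp: "ln (real N) / real N > 0" using elim by simp
    have cNp: "cN > 0" unfolding cN_def using G P0 lnp elim(2) by (intro mult_pos_pos) (auto simp del: divide_pos_pos)
    define R where "R = cN powr (1 / (alpha + 2))"
    have Rp: "R > 0" unfolding R_def using cNp by simp
    have RR: "R * R = cN powr (2 / (alpha + 2))"
      unfolding R_def using cNp by (simp add: powr_add[symmetric])
    have cR: "cN * R powr (- alpha) = cN powr (2 / (alpha + 2))"
    proof -
      have "cN * R powr (- alpha) = cN powr 1 * cN powr (- alpha / (alpha + 2))"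
        unfolding R_def using cNp by (simp add: powr_powr)
      also have "\<dots> = cN powr (1 + - alpha / (alpha + 2))" by (rule powr_add[symmetric])
      also have "1 + - alpha / (alpha + 2) = 2 / (alpha + 2)" using alpha by (simp add: field_simps)
      finally show ?thesis .
    qed
    have cw: "cN powr (2 / (alpha + 2)) = C0 * w N"
    proof -
      have "cN powr (2 / (alpha + 2)) = (G * P0) powr (2 / (alpha + 2)) * ((ln (real N) / real N) powr (alpha / 2)) powr (2 / (alpha + 2))"
        unfolding cN_def using G P0 lnp by (simp add: powr_mult mult.assoc)
      also have "((ln (real N) / real N) powr (alpha / 2)) powr (2 / (alpha + 2)) = w N"
        unfolding w_def by (simp add: powr_powr)
      finally show ?thesis unfolding C0_def .
    qed
    define \<mu> where "\<mu> = t * (4 * R * R * lam) + cN * R powr (- alpha)"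
    have mu: "\<mu> = (4 * t * lam + 1) * (C0 * w N)"
      unfolding \<mu>_def using RR cR cw by (simp add: algebra_simps)
    have w0: "w N \<ge> 0" unfolding w_def by simp
    have mu0: "\<mu> \<ge> 0" unfolding mu using C0p w0 tl by simp
    have Kl: "real (K N) = real N / l N" using K_def[OF elim(2)] l_ge[OF elim(2)] by (simp add: field_simps)
    have lpos: "l N > 0" using l_ge[OF elim(2)] by simp
    have key: "exp 1 * \<mu> / t = C * w N" unfolding mu C_def by (simp add: field_simps)
    have "measure (loc_space D N) (space (loc_space D N) - Eset D alpha cN t (K N) N)
        \<le> real N * (exp (- (real (K N) / 2 - 1)) * (1 + exp 1 * \<mu> / t) ^ (N - 1))"
      unfolding \<mu>_def by (rule bad_bound[OF lam Dm DA t less_imp_le[OF cNp] Rp alpha])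
    also have "\<dots> \<le> real N * (exp (- (real (K N) / 2 - 1)) * exp (real (N - 1) * (C * w N)))"
      unfolding key using Cp w0 by (intro mult_left_mono pow_le_exp) auto
    also have "\<dots> \<le> real N * (exp (- (real (K N) / 2 - 1)) * exp (real N * (C * w N)))"
      using Cp w0 elim by (intro mult_left_mono) (auto intro!: mult_right_mono)
    also have "\<dots> = real N * exp (1 - real (K N) / 2 + real N * C * w N)"
      by (simp add: exp_add[symmetric] algebra_simps)
    also have "\<dots> \<le> real N * exp (1 - C * (real N * w N))"
    proof -
      have "4 * C * (l N * w N) \<le> 1" using elim(1) Cp by (simp add: field_simps)
      then have "real N * (4 * C * (l N * w N)) \<le> real N" using mult_left_mono[of "4 * C * (l N * w N)" 1 "real N"] by simp
      then have "2 * C * real N * w N \<le> real N / (2 * l N)" using lpos by (simp add: field_simps)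
      then have "1 - real (K N) / 2 + real N * C * w N \<le> 1 - C * (real N * w N)"
        unfolding Kl by (simp add: field_simps)
      then show ?thesis by (intro mult_left_mono) auto
    qed
    also have "\<dots> = B N" unfolding B_def w_def by (simp add: exp_diff exp_minus field_simps)
    finally show ?case unfolding cN_def .
  qed
  have nn: "eventually (\<lambda>N. 0 \<le> measure (loc_space D N) (space (loc_space D N) -
            Eset D alpha (G * (P0 * (ln (real N) / real N) powr (alpha / 2))) t (K N) N)) sequentially"
    by simp
  show ?thesis by (rule tendsto_sandwich[OF nn le tendsto_const Blim])
qed



lemma gain_bounds:
  assumes "G > 0"
  shows "0 \<le> gain G alpha thT thR x oT oR m j \<and> gain G alpha thT thR x oT oR m j \<le> G * cmod (x m - x j) powr (- alpha)"
  using assms unfolding gain_def by auto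

lemma det_main:
  fixes x :: "nat \<Rightarrow> complex" and Pw :: "nat \<Rightarrow> real"
  assumes G: "G > 0" and N0: "N0 > 0" and t: "t > 0" and c: "c \<ge> 0"
    and n: "n \<in> {1..N}" and j: "d n \<in> {1..N}" "d n \<noteq> n"
    and a: "a \<in> profiles N K"
    and Pw: "\<And>m. m \<in> {1..N} \<Longrightarrow> 0 < Pw m \<and> G * Pw m \<le> c"
    and E: "\<forall>j\<in>{1..N}. (\<Sum>m\<in>{1..N}-{j}. min t (c * cmod (x m - x j) powr (- alpha))) \<le> t * (real K / 2 - 1)"
  shows "\<forall>b. rate (gain G alpha thT thR x oT oR) Pw N0 d N n b \<le> log 2 (1 + gain G alpha thT thR x oT oR n (d n) * Pw n / N0)"
    and "\<exists>Gd \<subseteq> {1..K}. real (card Gd) \<ge> real K / 2 \<and>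
     (\<forall>k\<in>Gd. log 2 (1 + gain G alpha thT thR x oT oR n (d n) * Pw n / N0)
        \<le> rate (gain G alpha thT thR x oT oR) Pw N0 d N n (a(n:=k)) + log 2 (1 + t / N0))"
proof -
  define g where "g = gain G alpha thT thR x oT oR"
  have gv: "\<forall>m\<in>{1..N}-{d n}. 0 \<le> g m (d n) * Pw m \<and> g m (d n) * Pw m \<le> c * cmod (x m - x (d n)) powr (- alpha)"
  proof
    fix m assume m: "m \<in> {1..N}-{d n}"
    have gb: "0 \<le> g m (d n)" "g m (d n) \<le> G * cmod (x m - x (d n)) powr (- alpha)"
      using gain_bounds[OF G] unfolding g_def by auto
    have P: "0 < Pw m" "G * Pw m \<le> c" using Pw m by auto
    have "g m (d n) * Pw m \<le> G * cmod (x m - x (d n)) powr (- alpha) * Pw m"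
      using gb P by (intro mult_right_mono) auto
    also have "\<dots> = (G * Pw m) * cmod (x m - x (d n)) powr (- alpha)" by simp
    also have "\<dots> \<le> c * cmod (x m - x (d n)) powr (- alpha)"
      using P by (intro mult_right_mono) auto
    finally show "0 \<le> g m (d n) * Pw m \<and> g m (d n) * Pw m \<le> c * cmod (x m - x (d n)) powr (- alpha)"
      using gb P by simp
  qed
  have sumb: "(\<Sum>m\<in>{1..N}-{d n}. min t (c * cmod (x m - x (d n)) powr (- alpha))) \<le> t * (real K / 2 - 1)"
    using E j by blast
  show "\<forall>b. rate (gain G alpha thT thR x oT oR) Pw N0 d N n b \<le> log 2 (1 + gain G alpha thT thR x oT oR n (d n) * Pw n / N0)"
  proof
    fix b
    have "0 \<le> g n (d n) * Pw n" using gv n j by auto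
    then show "rate (gain G alpha thT thR x oT oR) Pw N0 d N n b \<le> log 2 (1 + gain G alpha thT thR x oT oR n (d n) * Pw n / N0)"
      using rate_le[OF N0, of N d n g Pw b] gv unfolding g_def by auto
  qed
  show "\<exists>Gd \<subseteq> {1..K}. real (card Gd) \<ge> real K / 2 \<and>
     (\<forall>k\<in>Gd. log 2 (1 + gain G alpha thT thR x oT oR n (d n) * Pw n / N0)
        \<le> rate (gain G alpha thT thR x oT oR) Pw N0 d N n (a(n:=k)) + log 2 (1 + t / N0))"
    using det_core[where d=d and n=n and g=g and Pw=Pw and N=N and K=K and a=a and v="\<lambda>m. c * cmod (x m - x (d n)) powr (- alpha)", OF N0 t n j a gv sumb] unfolding g_def .
qed



lemma profiles_ne: "K \<ge> 1 \<Longrightarrow> profiles N K \<noteq> {}"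
proof -
  assume "K \<ge> 1"
  then have "restrict (\<lambda>_. 1) {1..N} \<in> profiles N K" unfolding profiles_def by auto
  then show ?thesis by auto
qed

lemma profiles_fin: "finite (profiles N K)"
  unfolding profiles_def by (intro finite_PiE) auto

theorem lemma3:
  fixes lam alpha G thT thR P0 N0 :: real and S :: nat and D :: "complex set"
    and d :: "nat \<Rightarrow> nat \<Rightarrow> nat" and l :: "nat \<Rightarrow> real" and K :: "nat \<Rightarrow> nat"
    and oT oR :: "nat \<Rightarrow> nat \<Rightarrow> real"
    and P :: "nat \<Rightarrow> (nat \<Rightarrow> complex) \<Rightarrow> nat \<Rightarrow> real"
  assumes lam_pos: "lam > 0" and alpha_pos: "alpha > 0" and G_pos: "G > 0"
    and thT: "0 < thT" "thT \<le> 2 * pi" and thR: "0 < thR" "thR \<le> 2 * pi"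
    and P0_pos: "P0 > 0" and N0_pos: "N0 > 0" and S_pos: "S > 0"
    and D_closed: "closed D" and D_area: "D \<in> sets lborel" "measure lborel D = 1 / lam"
    and d_range: "\<And>N n. N \<ge> 2 \<Longrightarrow> n \<in> {1..N} \<Longrightarrow> d N n \<in> {1..N} \<and> d N n \<noteq> n"
    and d_bound: "\<And>N j. N \<ge> 2 \<Longrightarrow> j \<in> {1..N} \<Longrightarrow> card {n\<in>{1..N}. d N n = j} \<le> S"
    and l_ge: "\<And>N. N \<ge> 2 \<Longrightarrow> l N \<ge> 1"
    and K_def: "\<And>N. N \<ge> 2 \<Longrightarrow> real (K N) * l N = real N"
    and l_lim: "(\<lambda>N. l N * (ln (real N) / real N) powr (alpha / (alpha + 2))) \<longlonglongrightarrow> 0"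
    and P_bound: "\<And>N x n. N \<ge> 2 \<Longrightarrow> x \<in> space (loc_space D N) \<Longrightarrow> n \<in> {1..N} \<Longrightarrow>
                    0 < P N x n \<and> P N x n \<le> P0 * (ln (real N) / real N) powr (alpha / 2)"
    and P_meas: "\<And>N n. N \<ge> 2 \<Longrightarrow> n \<in> {1..N} \<Longrightarrow>
                    (\<lambda>x. P N x n) \<in> borel_measurable (loc_space D N)"
  shows
    "(\<forall>q>1. \<forall>eps>0.
       (\<lambda>N. measure (loc_space D N)
          {x \<in> space (loc_space D N). \<forall>a\<in>profiles N (K N). \<forall>n\<in>{1..N}.
             real (card (best_resp
                (rate (gain G alpha thT thR x (oT N) (oR N)) (P N x) N0 (d N) N n)
                (K N) eps n a))
             \<ge> 1 / (2 * l N) * (1 - 1 / q) * real N}) \<longlonglongrightarrow> 1)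
     \<and> (\<forall>delta>0.
       (\<lambda>N. measure (loc_space D N)
          {x \<in> space (loc_space D N).
             (MAX n\<in>{1..N}. MAX a\<in>profiles N (K N).
                \<bar>(MAX k\<in>{1..K N}.
                    rate (gain G alpha thT thR x (oT N) (oR N)) (P N x) N0 (d N) N n (a(n := k)))
                 - log 2 (1 + gain G alpha thT thR x (oT N) (oR N) n (d N n) * P N x n / N0)\<bar>)
             > delta}) \<longlonglongrightarrow> 0)"
proof -
  have ED: "emeasure lborel D \<noteq> 0" "emeasure lborel D \<noteq> \<top>"
  proof -
    show "emeasure lborel D \<noteq> \<top>"
    proof
      assume "emeasure lborel D = \<top>"
      then have "measure lborel D = 0" by (simp add: measure_def)
      then show False using D_area lam_pos by simp
    qed
    show "emeasure lborel D \<noteq> 0"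
    proof
      assume "emeasure lborel D = 0"
      then have "measure lborel D = 0" by (simp add: measure_def)
      then show False using D_area lam_pos by simp
    qed
  qed
  have Mprob: "prob_space (loc_space D N)" for N
    unfolding loc_space_def using ED by (intro prob_space_PiM prob_space_uniform_measure) auto
  define cc where "cc N = G * (P0 * (ln (real N) / real N) powr (alpha / 2))" for N :: nat
  define Es where "Es t N = Eset D alpha (cc N) t (K N) N" for t N
  have Epr: "(\<lambda>N. measure (loc_space D N) (space (loc_space D N) - Es t N)) \<longlonglongrightarrow> 0" if "t > 0" for t
    unfolding Es_def cc_def
    by (rule bad_tendsto[OF lam_pos D_area(1) D_area(2) alpha_pos G_pos P0_pos that K_def l_ge l_lim])
  have Esets: "Es t N \<in> sets (loc_space D N)" for t N
    unfolding Es_def by (rule Eset_sets[OF D_area(1)])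
  have Es_space: "Es t N \<subseteq> space (loc_space D N)" for t N
    unfolding Es_def Eset_def by auto
  have Kpos: "K N \<ge> 1" if "N \<ge> 2" for N
  proof (rule ccontr)
    assume "\<not> K N \<ge> 1"
    then have "K N = 0" by simp
    then show False using K_def[OF that] that by simp
  qed
  have lpos: "l N > 0" if "N \<ge> 2" for N using l_ge[OF that] by simp
  have det: "(\<forall>b. rate (gain G alpha thT thR x (oT N) (oR N)) (P N x) N0 (d N) N n b
                \<le> log 2 (1 + gain G alpha thT thR x (oT N) (oR N) n (d N n) * P N x n / N0)) \<and>
             (\<exists>Gd \<subseteq> {1..K N}. real (card Gd) \<ge> real (K N) / 2 \<and>
               (\<forall>k\<in>Gd. log 2 (1 + gain G alpha thT thR x (oT N) (oR N) n (d N n) * P N x n / N0)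
                 \<le> rate (gain G alpha thT thR x (oT N) (oR N)) (P N x) N0 (d N) N n (a(n:=k)) + log 2 (1 + t / N0)))"
    if N: "N \<ge> 2" and t: "t > 0" and x: "x \<in> Es t N" and a: "a \<in> profiles N (K N)" and n: "n \<in> {1..N}"
    for N x n a t
  proof -
    have xs: "x \<in> space (loc_space D N)" using x Es_space by auto
    have c0: "cc N \<ge> 0"
      unfolding cc_def using G_pos P0_pos by (intro mult_nonneg_nonneg) auto
    have Pw: "0 < P N x m \<and> G * P N x m \<le> cc N" if "m \<in> {1..N}" for m
      using P_bound[OF N xs that] G_pos unfolding cc_def by (auto intro: mult_left_mono)
    have E: "\<forall>j\<in>{1..N}. (\<Sum>m\<in>{1..N}-{j}. min t (cc N * cmod (x m - x j) powr (- alpha))) \<le> t * (real (K N) / 2 - 1)"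
      using x unfolding Es_def Eset_def by auto
    have dn: "d N n \<in> {1..N}" "d N n \<noteq> n" using d_range[OF N n] by auto
    show ?thesis
      using det_main[where d="d N" and n=n and N=N, OF G_pos N0_pos t c0 n dn a, of "P N x" x alpha thT thR "oT N" "oR N"] Pw E by blast
  qed
  show ?thesis
  proof (intro conjI allI impI)
    fix q eps :: real assume q: "q > 1" and eps: "eps > 0"
    define t where "t = N0 * (2 powr eps - 1)"
    have t: "t > 0" unfolding t_def using N0_pos eps by (simp add: gr_one_powr)
    have tau: "log 2 (1 + t / N0) = eps" unfolding t_def using N0_pos by simp
    define Good where "Good N = {x \<in> space (loc_space D N). \<forall>a\<in>profiles N (K N). \<forall>n\<in>{1..N}.
             real (card (best_resp
                (rate (gain G alpha thT thR x (oT N) (oR N)) (P N x) N0 (d N) N n)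
                (K N) eps n a))
             \<ge> 1 / (2 * l N) * (1 - 1 / q) * real N}" for N
    have sub: "Es t N \<subseteq> Good N" if N: "N \<ge> 2" for N
    proof
      fix x assume x: "x \<in> Es t N"
      have xs: "x \<in> space (loc_space D N)" using x Es_space by auto
      show "x \<in> Good N" unfolding Good_def
      proof (intro CollectI conjI ballI xs)
        fix a n assume a: "a \<in> profiles N (K N)" and n: "n \<in> {1..N}"
        define u where "u = rate (gain G alpha thT thR x (oT N) (oR N)) (P N x) N0 (d N) N n"
        define R where "R = log 2 (1 + gain G alpha thT thR x (oT N) (oR N) n (d N n) * P N x n / N0)"
        from det[OF N t x a n] obtain Gd where
          up: "\<forall>b. u b \<le> R" and Gd: "Gd \<subseteq> {1..K N}" "real (card Gd) \<ge> real (K N) / 2"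
          and Gdk: "\<forall>k\<in>Gd. R \<le> u (a(n:=k)) + eps"
          unfolding u_def R_def tau by blast
        have "Gd \<subseteq> best_resp u (K N) eps n a"
        proof
          fix k assume k: "k \<in> Gd"
          have "(MAX k'\<in>{1..K N}. u (a(n := k'))) \<le> R"
            using Kpos[OF N] up by (subst Max_le_iff) auto
          also have "\<dots> \<le> u (a(n := k)) + eps" using Gdk k by auto
          finally show "k \<in> best_resp u (K N) eps n a"
            unfolding best_resp_def using k Gd by auto
        qed
        then have "card Gd \<le> card (best_resp u (K N) eps n a)"
          by (intro card_mono) (auto simp: best_resp_def)
        then have "real (K N) / 2 \<le> real (card (best_resp u (K N) eps n a))" using Gd by simp
        moreover have "1 / (2 * l N) * (1 - 1 / q) * real N \<le> real (K N) / 2"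
        proof -
          have "1 / (2 * l N) * (1 - 1 / q) * real N = 1 / (2 * l N) * (1 - 1 / q) * (real (K N) * l N)"
            using K_def[OF N] by simp
          also have "\<dots> = real (K N) / 2 * (1 - 1 / q)"
            using lpos[OF N] by (simp add: field_simps)
          also have "\<dots> \<le> real (K N) / 2" using q by (simp add: mult_left_le)
          finally show ?thesis .
        qed
        ultimately show "1 / (2 * l N) * (1 - 1 / q) * real N \<le> real (card (best_resp u (K N) eps n a))"
          by linarith
      qed
    qed
    have Gsets: "Good N \<in> sets (loc_space D N)" if N: "N \<ge> 2" for N
      unfolding Good_def
    proof (rule good_set_meas[OF profiles_fin])
      fix a n k assume a: "a \<in> profiles N (K N)" and n: "n \<in> {1..N}"
      have dn: "d N n \<in> {1..N}" using d_range[OF N n] by auto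
      show "(\<lambda>x. rate (gain G alpha thT thR x (oT N) (oR N)) (P N x) N0 (d N) N n (a(n := k))) \<in> borel_measurable (loc_space D N)"
      proof (rule rate_meas[OF _ _ n])
        fix m assume m: "m \<in> {1..N}"
        show "(\<lambda>x. gain G alpha thT thR x (oT N) (oR N) m (d N n)) \<in> borel_measurable (loc_space D N)"
          by (intro meas_transfer[OF D_area(1)] gain_meas m dn)
        show "(\<lambda>x. P N x m) \<in> borel_measurable (loc_space D N)" by (rule P_meas[OF N m])
      qed
    qed
    have lo: "eventually (\<lambda>N. 1 - measure (loc_space D N) (space (loc_space D N) - Es t N) \<le> measure (loc_space D N) (Good N)) sequentially"
      using eventually_ge_at_top[of 2]
    proof eventually_elim
      case (elim N)
      interpret P: prob_space "loc_space D N" by (rule Mprob)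
      have "1 - measure (loc_space D N) (space (loc_space D N) - Es t N) = measure (loc_space D N) (Es t N)"
        using P.prob_compl[OF Esets] by simp
      also have "\<dots> \<le> measure (loc_space D N) (Good N)"
        by (intro P.finite_measure_mono sub Gsets elim)
      finally show ?case .
    qed
    have hi: "eventually (\<lambda>N. measure (loc_space D N) (Good N) \<le> 1) sequentially"
      by (intro always_eventually allI prob_space.prob_le_1 Mprob)
    have "(\<lambda>N. 1 - measure (loc_space D N) (space (loc_space D N) - Es t N)) \<longlonglongrightarrow> 1 - 0"
      by (intro tendsto_diff tendsto_const Epr t)
    then have "(\<lambda>N. measure (loc_space D N) (Good N)) \<longlonglongrightarrow> 1"
      using tendsto_sandwich[OF lo hi _ tendsto_const] by simp
    then show "(\<lambda>N. measure (loc_space D N)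
          {x \<in> space (loc_space D N). \<forall>a\<in>profiles N (K N). \<forall>n\<in>{1..N}.
             real (card (best_resp
                (rate (gain G alpha thT thR x (oT N) (oR N)) (P N x) N0 (d N) N n)
                (K N) eps n a))
             \<ge> 1 / (2 * l N) * (1 - 1 / q) * real N}) \<longlonglongrightarrow> 1"
      unfolding Good_def .
  next
    fix delta :: real assume delta: "delta > 0"
    define t where "t = N0 * (2 powr (delta / 2) - 1)"
    have t: "t > 0" unfolding t_def using N0_pos delta by (simp add: gr_one_powr)
    have tau: "log 2 (1 + t / N0) = delta / 2" unfolding t_def using N0_pos by simp
    define Bad where "Bad N = {x \<in> space (loc_space D N).
             (MAX n\<in>{1..N}. MAX a\<in>profiles N (K N).
                \<bar>(MAX k\<in>{1..K N}.
                    rate (gain G alpha thT thR x (oT N) (oR N)) (P N x) N0 (d N) N n (a(n := k)))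
                 - log 2 (1 + gain G alpha thT thR x (oT N) (oR N) n (d N n) * P N x n / N0)\<bar>)
             > delta}" for N
    have sub: "Bad N \<subseteq> space (loc_space D N) - Es t N" if N: "N \<ge> 2" for N
    proof
      fix x assume xB: "x \<in> Bad N"
      have xs: "x \<in> space (loc_space D N)" using xB unfolding Bad_def by auto
      show "x \<in> space (loc_space D N) - Es t N"
      proof (rule DiffI[OF xs], rule notI)
        assume x: "x \<in> Es t N"
        have each: "\<bar>(MAX k\<in>{1..K N}. rate (gain G alpha thT thR x (oT N) (oR N)) (P N x) N0 (d N) N n (a(n := k)))
                 - log 2 (1 + gain G alpha thT thR x (oT N) (oR N) n (d N n) * P N x n / N0)\<bar> \<le> delta / 2"
          if a: "a \<in> profiles N (K N)" and n: "n \<in> {1..N}" for a n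
        proof -
          define u where "u = rate (gain G alpha thT thR x (oT N) (oR N)) (P N x) N0 (d N) N n"
          define R where "R = log 2 (1 + gain G alpha thT thR x (oT N) (oR N) n (d N n) * P N x n / N0)"
          from det[OF N t x a n] obtain Gd where
            up: "\<forall>b. u b \<le> R" and Gd: "Gd \<subseteq> {1..K N}" "real (card Gd) \<ge> real (K N) / 2"
            and Gdk: "\<forall>k\<in>Gd. R \<le> u (a(n:=k)) + delta / 2"
            unfolding u_def R_def tau by blast
          have "Gd \<noteq> {}" using Gd Kpos[OF N] by auto
          then obtain k0 where k0: "k0 \<in> Gd" by auto
          have m1: "(MAX k\<in>{1..K N}. u (a(n := k))) \<le> R"
            using Kpos[OF N] up by (subst Max_le_iff) auto
          have "u (a(n := k0)) \<le> (MAX k\<in>{1..K N}. u (a(n := k)))"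
            using k0 Gd by (intro Max_ge) auto
          then have m2: "R - delta / 2 \<le> (MAX k\<in>{1..K N}. u (a(n := k)))" using Gdk k0 by auto
          show ?thesis using m1 m2 unfolding u_def R_def by linarith
        qed
        have inner: "(MAX a\<in>profiles N (K N).
                \<bar>(MAX k\<in>{1..K N}.
                    rate (gain G alpha thT thR x (oT N) (oR N)) (P N x) N0 (d N) N n (a(n := k)))
                 - log 2 (1 + gain G alpha thT thR x (oT N) (oR N) n (d N n) * P N x n / N0)\<bar>) \<le> delta / 2" if n: "n \<in> {1..N}" for n
          using profiles_ne[OF Kpos[OF N]] profiles_fin each n
          by (subst Max_le_iff) auto
        have "(MAX n\<in>{1..N}. MAX a\<in>profiles N (K N).
                \<bar>(MAX k\<in>{1..K N}.
                    rate (gain G alpha thT thR x (oT N) (oR N)) (P N x) N0 (d N) N n (a(n := k)))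
                 - log 2 (1 + gain G alpha thT thR x (oT N) (oR N) n (d N n) * P N x n / N0)\<bar>) \<le> delta / 2"
          using inner N by (subst Max_le_iff) auto
        then show False using xB delta unfolding Bad_def by auto
      qed
    qed
    have le: "eventually (\<lambda>N. measure (loc_space D N) (Bad N) \<le> measure (loc_space D N) (space (loc_space D N) - Es t N)) sequentially"
      using eventually_ge_at_top[of 2]
    proof eventually_elim
      case (elim N)
      interpret P: prob_space "loc_space D N" by (rule Mprob)
      show ?case
      proof (cases "Bad N \<in> sets (loc_space D N)")
        case True
        then show ?thesis using Esets[of t N] by (intro P.finite_measure_mono sub elim) auto
      next
        case False
        then show ?thesis by (simp add: measure_notin_sets)
      qed
    qed
    have nn: "eventually (\<lambda>N. 0 \<le> measure (loc_space D N) (Bad N)) sequentially" by simp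
    have "(\<lambda>N. measure (loc_space D N) (Bad N)) \<longlonglongrightarrow> 0"
      by (rule tendsto_sandwich[OF nn le tendsto_const Epr[OF t]])
    then show "(\<lambda>N. measure (loc_space D N)
          {x \<in> space (loc_space D N).
             (MAX n\<in>{1..N}. MAX a\<in>profiles N (K N).
                \<bar>(MAX k\<in>{1..K N}.
                    rate (gain G alpha thT thR x (oT N) (oR N)) (P N x) N0 (d N) N n (a(n := k)))
                 - log 2 (1 + gain G alpha thT thR x (oT N) (oR N) n (d N n) * P N x n / N0)\<bar>)
             > delta}) \<longlonglongrightarrow> 0"
      unfolding Bad_def .
  qed
qed


end
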